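(* Fix any $\alpha>0$ (and integer $k\ge2$, $r>0$, $0<p<1$). Then, as $n\to\infty$, $$\frac{\mathbb{E}[X^2]}{\mathbb{E}[X]^2}=(1+o(1))\sum_{S=0}^{n}B(S)\left(f(S/n)+\frac{p\,g(S/n)}{(1-p)(1-d^{-k})\,n}\right)^{rm}\le (1+o(1))\sum_{S=0}^{n}\Phi(S).$$
   Context: Model RB with parameters $(n,\alpha,r,k,p)$, where $n$ is the number of variables, $\alpha>0$, $r>0$, $k\ge 2$ an integer and $0<p<1$: there are $n$ variables $x_1,\dots,x_n$, each with the same domain $D$ of size $d=n^{\alpha}$ (treated as an integer). A random instance is generated as follows: (1) select, independently with repetition, $t=rn\ln d$ constraints, the scope of each being a set of $k$ distinct variables chosen uniformly at random among the $n$ variables; (2) for each constraint, select uniformly at random without repetition a set of $q=p\,d^{k}$ "incompatible" tuples from $D^{k}$. An assignment to all variables is a solution if for every constraint the tuple of values of its scope is not incompatible. $X$ is the number of solutions. Limits are as $n\to\infty$ with $\alpha,r,k,p$ fixed. Notation: $m=n\ln d$; $f(s)=1+\frac{p}{1-p}\cdot\frac{s^k-d^{-k}}{1-d^{-k}}$ for $s\in[0,1]$; $g(s)=-\frac{k(k-1)}{2}(1-s)s^{k-1}$; $B(S)=\binom{n}{S}\left(\frac1d\right)^{S}\left(1-\frac1d\right)^{n-S}$; $W(S)=f(S/n)^{rm}$; $\Phi(S)=B(S)W(S)$ for $S=0,1,\dots,n$. *)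

theory Defs
  imports "HOL-Probability.Probability"
begin

text \<open>A constraint is a pair
  (scope, incompatible tuples): the scope is a k-subset of the variables, and a tuple of values
  of the scope is an (extensional) function from the scope to D, i.e. an element of
  PiE scope (\<lambda>_. D), which is in bijection with D^k.\<close>

definition rb_constraint_pmf :: "nat \<Rightarrow> nat \<Rightarrow> nat \<Rightarrow> nat \<Rightarrow> (nat set \<times> (nat \<Rightarrow> nat) set) pmf" where
  "rb_constraint_pmf n d k q =
     do { S \<leftarrow> pmf_of_set {S. S \<subseteq> {..<n} \<and> card S = k};
          I \<leftarrow> pmf_of_set {I. I \<subseteq> PiE S (\<lambda>_. {..<d}) \<and> card I = q};
          return_pmf (S, I) }"

definition rb_instance_pmf :: "nat \<Rightarrow> nat \<Rightarrow> nat \<Rightarrow> nat \<Rightarrow> nat \<Rightarrow> (nat \<Rightarrow> nat set \<times> (nat \<Rightarrow> nat) set) pmf" where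
  "rb_instance_pmf n d k q t = Pi_pmf {..<t} ({}, {}) (\<lambda>_. rb_constraint_pmf n d k q)"

definition rb_num_sol :: "nat \<Rightarrow> nat \<Rightarrow> nat \<Rightarrow> (nat \<Rightarrow> nat set \<times> (nat \<Rightarrow> nat) set) \<Rightarrow> nat" where
  "rb_num_sol n d t inst =
     card {\<sigma> \<in> PiE {..<n} (\<lambda>_. {..<d}). \<forall>i<t. restrict \<sigma> (fst (inst i)) \<notin> snd (inst i)}"

definition rb_d :: "real \<Rightarrow> nat \<Rightarrow> nat" where
  "rb_d \<alpha> n = nat \<lfloor>real n powr \<alpha>\<rfloor>"

text \<open>t = r m = r n ln d.\<close>
definition rb_t :: "real \<Rightarrow> real \<Rightarrow> nat \<Rightarrow> nat" where
  "rb_t \<alpha> r n = nat \<lfloor>r * real n * ln (real (rb_d \<alpha> n))\<rfloor>"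

definition rb_q :: "real \<Rightarrow> nat \<Rightarrow> real \<Rightarrow> nat \<Rightarrow> nat" where
  "rb_q \<alpha> k p n = nat \<lfloor>p * real (rb_d \<alpha> n) ^ k\<rfloor>"

text \<open>The actual tightness q / d^k of the generated instance.\<close>
definition rb_p :: "real \<Rightarrow> nat \<Rightarrow> real \<Rightarrow> nat \<Rightarrow> real" where
  "rb_p \<alpha> k p n = real (rb_q \<alpha> k p n) / real (rb_d \<alpha> n) ^ k"

definition rb_moment_ratio :: "real \<Rightarrow> real \<Rightarrow> nat \<Rightarrow> real \<Rightarrow> nat \<Rightarrow> real" where
  "rb_moment_ratio \<alpha> r k p n =
     (let d = rb_d \<alpha> n; t = rb_t \<alpha> r n; q = rb_q \<alpha> k p n;
          M = rb_instance_pmf n d k q t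
      in measure_pmf.expectation M (\<lambda>inst. real (rb_num_sol n d t inst) ^ 2)
         / (measure_pmf.expectation M (\<lambda>inst. real (rb_num_sol n d t inst))) ^ 2)"

definition rb_f :: "real \<Rightarrow> nat \<Rightarrow> nat \<Rightarrow> real \<Rightarrow> real" where
  "rb_f p d k s = 1 + p / (1 - p) * ((s ^ k - (1 / real d) ^ k) / (1 - (1 / real d) ^ k))"

definition rb_g :: "nat \<Rightarrow> real \<Rightarrow> real" where
  "rb_g k s = - (real k * (real k - 1) / 2) * (1 - s) * s ^ (k - 1)"

definition rb_B :: "nat \<Rightarrow> nat \<Rightarrow> nat \<Rightarrow> real" where
  "rb_B n d S = real (n choose S) * (1 / real d) ^ S * (1 - 1 / real d) ^ (n - S)"

end

theory Submission
  imports Defs "HOL-Real_Asymp.Real_Asymp"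
begin

lemma avoid1:
  assumes "finite A" "u \<in> A"
  shows "card {I. I \<subseteq> A \<and> card I = q \<and> u \<notin> I} = (card A - 1) choose q"
proof -
  have "{I. I \<subseteq> A \<and> card I = q \<and> u \<notin> I} = {I. I \<subseteq> A - {u} \<and> card I = q}" by auto
  then show ?thesis using assms by (simp add: n_subsets)
qed

lemma avoid2:
  assumes "finite A" "u \<in> A" "v \<in> A" "u \<noteq> v"
  shows "card {I. I \<subseteq> A \<and> card I = q \<and> u \<notin> I \<and> v \<notin> I} = (card A - 2) choose q"
proof -
  have "{I. I \<subseteq> A \<and> card I = q \<and> u \<notin> I \<and> v \<notin> I} = {I. I \<subseteq> A - {u,v} \<and> card I = q}" by auto
  moreover have "card (A - {u,v}) = card A - 2" using assms by (simp add: card_Diff_subset)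
  ultimately show ?thesis using assms by (simp add: n_subsets)
qed

lemma binom_ratio1:
  assumes "q \<le> N" "N \<ge> 1"
  shows "real ((N - 1) choose q) / real (N choose q) = (real N - real q) / real N"
proof -
  have "(N - q) * (N choose q) = N * ((N - 1) choose q)" by (rule binomial_absorb_comp)
  then have "real (N - q) * real (N choose q) = real N * real ((N - 1) choose q)"
    by (metis of_nat_mult)
  moreover have "real (N choose q) > 0" using assms by simp
  ultimately show ?thesis using assms by (simp add: field_simps of_nat_diff)
qed

lemma binom_ratio2:
  assumes "q \<le> N" "N \<ge> 2"
  shows "real ((N - 2) choose q) / real (N choose q) = (real N - real q) * (real N - real q - 1) / (real N * (real N - 1))"
proof (cases "q = N")
  case True
  then show ?thesis using assms by simp
next
  case False
  have h1: "(N - q) * (N choose q) = N * ((N - 1) choose q)" by (rule binomial_absorb_comp)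
  have h2: "(N - 1 - q) * ((N - 1) choose q) = (N - 1) * ((N - 1 - 1) choose q)" by (rule binomial_absorb_comp)
  have e: "N - 1 - 1 = N - 2" by simp
  have r1: "(real N - real q) * real (N choose q) = real N * real ((N - 1) choose q)"
    using h1 assms by (metis of_nat_diff of_nat_mult)
  have r2: "(real N - 1 - real q) * real ((N - 1) choose q) = (real N - 1) * real ((N - 2) choose q)"
  proof -
    have "q \<le> N - 1" using assms False by simp
    then have "real (N - 1 - q) = real N - 1 - real q" using assms by (simp add: of_nat_diff)
    moreover have "real (N - 1) = real N - 1" using assms by (simp add: of_nat_diff)
    ultimately show ?thesis using h2 e by (metis of_nat_mult)
  qed
  have p: "real (N choose q) > 0" using assms by simp
  have "real N * (real N - 1) * real ((N - 2) choose q) = real N * ((real N - 1 - real q) * real ((N - 1) choose q))"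
    using r2 by simp
  also have "\<dots> = (real N - 1 - real q) * ((real N - real q) * real (N choose q))" using r1 by (simp add: algebra_simps)
  finally have "real N * (real N - 1) * real ((N - 2) choose q) = (real N - real q) * (real N - real q - 1) * real (N choose q)"
    by (simp add: algebra_simps)
  moreover have "real N * (real N - 1) > 0" using assms by simp
  ultimately show ?thesis using p assms by (subst frac_eq_eq) (auto simp: algebra_simps)
qed


definition okc :: "(nat \<Rightarrow> nat) \<Rightarrow> (nat set \<times> (nat \<Rightarrow> nat) set) \<Rightarrow> bool" where
  "okc \<sigma> c \<longleftrightarrow> restrict \<sigma> (fst c) \<notin> snd c"

lemma inner_count:
  assumes S: "S \<subseteq> {..<n}" "card S = k" and q: "q \<le> d ^ k" and d: "d ^ k \<ge> 2"
    and \<sigma>: "\<sigma> \<in> PiE {..<n} (\<lambda>_. {..<d::nat})" and \<tau>: "\<tau> \<in> PiE {..<n} (\<lambda>_. {..<d})"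
  shows "(\<Sum>I\<in>{I. I \<subseteq> PiE S (\<lambda>_. {..<d}) \<and> card I = q}. of_bool (okc \<sigma> (S, I) \<and> okc \<tau> (S, I)))
           / real (card {I. I \<subseteq> PiE S (\<lambda>_. {..<d}) \<and> card I = q})
       = (if S \<subseteq> {i\<in>{..<n}. \<sigma> i = \<tau> i}
          then (real d ^ k - real q) / real d ^ k
          else (real d ^ k - real q) * (real d ^ k - real q - 1) / (real d ^ k * (real d ^ k - 1)))"
proof -
  define A where "A = PiE S (\<lambda>_. {..<d})"
  have fS: "finite S" using S finite_subset by blast
  have fA: "finite A" unfolding A_def using fS by (simp add: finite_PiE)
  have cA: "card A = d ^ k" unfolding A_def using fS S by (simp add: card_PiE)
  define u where "u = restrict \<sigma> S"
  define v where "v = restrict \<tau> S"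
  have uA: "u \<in> A" unfolding u_def A_def using \<sigma> S by (auto simp: PiE_iff)
  have vA: "v \<in> A" unfolding v_def A_def using \<tau> S by (auto simp: PiE_iff)
  have uv: "u = v \<longleftrightarrow> S \<subseteq> {i\<in>{..<n}. \<sigma> i = \<tau> i}"
    unfolding u_def v_def using S by (auto simp: restrict_def fun_eq_iff split: if_splits)
  have cI: "card {I. I \<subseteq> A \<and> card I = q} = d ^ k choose q" using fA cA by (simp add: n_subsets)
  have fI: "finite {I. I \<subseteq> A \<and> card I = q}" using fA by simp
  have sumeq: "(\<Sum>I\<in>{I. I \<subseteq> A \<and> card I = q}. of_bool (okc \<sigma> (S, I) \<and> okc \<tau> (S, I)) :: real)
      = real (card {I. I \<subseteq> A \<and> card I = q \<and> u \<notin> I \<and> v \<notin> I})"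
  proof -
    have "(\<Sum>I\<in>{I. I \<subseteq> A \<and> card I = q}. of_bool (okc \<sigma> (S, I) \<and> okc \<tau> (S, I)) :: real)
       = real (card ({I. I \<subseteq> A \<and> card I = q} \<inter> {I. okc \<sigma> (S, I) \<and> okc \<tau> (S, I)}))"
      using fI by simp
    also have "{I. I \<subseteq> A \<and> card I = q} \<inter> {I. okc \<sigma> (S, I) \<and> okc \<tau> (S, I)} = {I. I \<subseteq> A \<and> card I = q \<and> u \<notin> I \<and> v \<notin> I}"
      unfolding okc_def u_def v_def by auto
    finally show ?thesis .
  qed
  show ?thesis
  proof (cases "u = v")
    case True
    have "{I. I \<subseteq> A \<and> card I = q \<and> u \<notin> I \<and> v \<notin> I} = {I. I \<subseteq> A \<and> card I = q \<and> u \<notin> I}" using True by auto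
    then have "real (card {I. I \<subseteq> A \<and> card I = q \<and> u \<notin> I \<and> v \<notin> I}) / real (card {I. I \<subseteq> A \<and> card I = q})
       = (real (d^k) - real q) / real (d^k)"
      using avoid1[OF fA uA, of q] cA cI binom_ratio1[of q "d^k"] q d by simp
    then show ?thesis using True uv sumeq unfolding A_def by simp
  next
    case False
    have "real (card {I. I \<subseteq> A \<and> card I = q \<and> u \<notin> I \<and> v \<notin> I}) / real (card {I. I \<subseteq> A \<and> card I = q})
       = (real (d^k) - real q) * (real (d^k) - real q - 1) / (real (d^k) * (real (d^k) - 1))"
      using avoid2[OF fA uA vA False, of q] cA cI binom_ratio2[of q "d^k"] q d by simp
    then show ?thesis using False uv sumeq unfolding A_def by simp
  qed
qed


lemma constr_exp:
  assumes kn: "k \<le> n" and q: "q \<le> d ^ k" and d: "d ^ k \<ge> 2"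
    and \<sigma>: "\<sigma> \<in> PiE {..<n} (\<lambda>_. {..<d::nat})" and \<tau>: "\<tau> \<in> PiE {..<n} (\<lambda>_. {..<d})"
  shows "measure_pmf.expectation (rb_constraint_pmf n d k q) (\<lambda>c. of_bool (okc \<sigma> c \<and> okc \<tau> c))
     = (real (card {i\<in>{..<n}. \<sigma> i = \<tau> i} choose k) * ((real d ^ k - real q) / real d ^ k)
        + (real (n choose k) - real (card {i\<in>{..<n}. \<sigma> i = \<tau> i} choose k))
          * ((real d ^ k - real q) * (real d ^ k - real q - 1) / (real d ^ k * (real d ^ k - 1))))
       / real (n choose k)"
proof -
  define KS where "KS = {S. S \<subseteq> {..<n} \<and> card S = k}"
  define IS where "IS = (\<lambda>S::nat set. {I. I \<subseteq> PiE S (\<lambda>_. {..<d}) \<and> card I = q})"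
  define Ag where "Ag = {i\<in>{..<n}. \<sigma> i = \<tau> i}"
  define a1 where "a1 = (real d ^ k - real q) / real d ^ k"
  define a2 where "a2 = (real d ^ k - real q) * (real d ^ k - real q - 1) / (real d ^ k * (real d ^ k - 1))"
  have fKS: "finite KS" unfolding KS_def by (rule finite_subset[of _ "Pow {..<n}"]) auto
  have cKS: "card KS = n choose k" unfolding KS_def by (simp add: n_subsets)
  have KSne: "KS \<noteq> {}" using cKS kn by (metis card.empty zero_less_binomial_iff less_irrefl)
  have fin_sub: "finite S" if "S \<in> KS" for S using that unfolding KS_def by (auto intro: finite_subset)
  have fIS: "finite (IS S)" if "S \<in> KS" for S unfolding IS_def using fin_sub[OF that] by (simp add: finite_PiE)
  have cIS: "card (IS S) = d ^ k choose q" if "S \<in> KS" for S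
    unfolding IS_def using fin_sub[OF that] that by (simp add: n_subsets finite_PiE card_PiE KS_def)
  have ISne: "IS S \<noteq> {}" if "S \<in> KS" for S using cIS[OF that] q by (metis card.empty zero_less_binomial_iff less_irrefl)
  have inner: "measure_pmf.expectation (pmf_of_set (IS S) \<bind> (\<lambda>I. return_pmf (S, I))) (\<lambda>c. of_bool (okc \<sigma> c \<and> okc \<tau> c))
      = (if S \<subseteq> Ag then a1 else a2)" if S: "S \<in> KS" for S
  proof -
    have "measure_pmf.expectation (pmf_of_set (IS S) \<bind> (\<lambda>I. return_pmf (S, I))) (\<lambda>c. of_bool (okc \<sigma> c \<and> okc \<tau> c))
        = (\<Sum>I\<in>IS S. of_bool (okc \<sigma> (S, I) \<and> okc \<tau> (S, I)) / real (card (IS S)))"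
      using ISne[OF S] fIS[OF S] by (subst pmf_expectation_bind_pmf_of_set) (auto simp del: sum_of_bool_eq simp: divide_inverse_commute)
    also have "\<dots> = (\<Sum>I\<in>IS S. of_bool (okc \<sigma> (S, I) \<and> okc \<tau> (S, I))) / real (card (IS S))"
      by (simp add: sum_divide_distrib)
    also have "\<dots> = (if S \<subseteq> Ag then a1 else a2)"
      unfolding IS_def Ag_def a1_def a2_def
      by (rule inner_count) (use S q d \<sigma> \<tau> in \<open>auto simp: KS_def\<close>)
    finally show ?thesis .
  qed
  have "measure_pmf.expectation (rb_constraint_pmf n d k q) (\<lambda>c. of_bool (okc \<sigma> c \<and> okc \<tau> c))
      = (\<Sum>S\<in>KS. measure_pmf.expectation (pmf_of_set (IS S) \<bind> (\<lambda>I. return_pmf (S, I))) (\<lambda>c. of_bool (okc \<sigma> c \<and> okc \<tau> c)) / real (card KS))"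
  proof -
    have eqC: "rb_constraint_pmf n d k q = pmf_of_set KS \<bind> (\<lambda>S. pmf_of_set (IS S) \<bind> (\<lambda>I. return_pmf (S, I)))"
      unfolding rb_constraint_pmf_def KS_def IS_def by simp
    have fin: "finite (set_pmf (pmf_of_set (IS S) \<bind> (\<lambda>I. return_pmf (S, I))))" if "S \<in> KS" for S
    proof -
      have "set_pmf (pmf_of_set (IS S) \<bind> (\<lambda>I. return_pmf (S, I))) = (\<lambda>I. (S, I)) ` IS S"
        using ISne[OF that] fIS[OF that] by auto
      then show ?thesis using fIS[OF that] by simp
    qed
    show ?thesis unfolding eqC
      by (subst pmf_expectation_bind_pmf_of_set) (use KSne fKS fin in \<open>auto simp: divide_inverse_commute\<close>)
  qed
  also have "\<dots> = (\<Sum>S\<in>KS. (if S \<subseteq> Ag then a1 else a2)) / real (card KS)"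
    by (simp add: inner sum_divide_distrib)
  also have "(\<Sum>S\<in>KS. (if S \<subseteq> Ag then a1 else a2)) = real (card (KS \<inter> {S. S \<subseteq> Ag})) * a1 + real (card (KS \<inter> - {S. S \<subseteq> Ag})) * a2"
    using fKS by (simp add: sum.If_cases)
  also have "KS \<inter> {S. S \<subseteq> Ag} = {S. S \<subseteq> Ag \<and> card S = k}" unfolding KS_def Ag_def by auto
  also have "card {S. S \<subseteq> Ag \<and> card S = k} = card Ag choose k" by (rule n_subsets) (simp add: Ag_def)
  also have "card (KS \<inter> - {S. S \<subseteq> Ag}) = card KS - card (KS \<inter> {S. S \<subseteq> Ag})"
    using fKS by (metis Diff_eq card_Diff_subset_Int finite_Int inf.cobounded1 Int_Diff Int_absorb)
  also have "KS \<inter> {S. S \<subseteq> Ag} = {S. S \<subseteq> Ag \<and> card S = k}" unfolding KS_def Ag_def by auto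
  also have "card {S. S \<subseteq> Ag \<and> card S = k} = card Ag choose k" by (rule n_subsets) (simp add: Ag_def)
  finally show ?thesis
  proof -
    have le: "card Ag choose k \<le> n choose k"
    proof (rule binomial_right_mono)
      have "card Ag \<le> card {..<n}" unfolding Ag_def by (rule card_mono) auto
      then show "card Ag \<le> n" by simp
    qed
    assume h: "measure_pmf.expectation (rb_constraint_pmf n d k q) (\<lambda>c. of_bool (okc \<sigma> c \<and> okc \<tau> c)) =
      (real (card Ag choose k) * a1 + real (card KS - (card Ag choose k)) * a2) / real (card KS)"
    show ?thesis using h le unfolding cKS Ag_def a1_def a2_def by (simp add: of_nat_diff)
  qed
qed


lemma of_bool_all_prod: "finite A \<Longrightarrow> (of_bool (\<forall>i\<in>A. P i) :: real) = (\<Prod>i\<in>A. of_bool (P i))"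
  by (induction A rule: finite_induct) auto

lemma integrable_ind_pmf: "integrable (measure_pmf M) (\<lambda>x. (of_bool (P x) :: real))"
  by (rule measure_pmf.integrable_const_bound[where B=1]) auto

lemma integrable_prod_ind:
  "integrable (measure_pmf (Pi_pmf {..<t} dflt (\<lambda>_. C))) (\<lambda>inst. \<Prod>i\<in>{..<(t::nat)}. (of_bool (P (inst i)) :: real))"
  by (rule integrable_prod_Pi_pmf[where f="\<lambda>_ c. of_bool (P c)"]) (simp_all add: integrable_ind_pmf)

lemma exp_prod_ind:
  "measure_pmf.expectation (Pi_pmf {..<t} dflt (\<lambda>_. C)) (\<lambda>inst. \<Prod>i\<in>{..<t}. (of_bool (P (inst i)) :: real))
   = measure_pmf.expectation C (\<lambda>c. of_bool (P c)) ^ t"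
  using expectation_prod_Pi_pmf[of "{..<t}" "\<lambda>_. C" "\<lambda>_ c. of_bool (P c)" dflt]
  by (simp add: integrable_ind_pmf)

lemma num_sol_sum:
  "real (rb_num_sol n d t inst) = (\<Sum>\<sigma>\<in>PiE {..<n} (\<lambda>_. {..<d}). \<Prod>i\<in>{..<t}. of_bool (okc \<sigma> (inst i)))"
proof -
  have "real (rb_num_sol n d t inst) = (\<Sum>\<sigma>\<in>PiE {..<n} (\<lambda>_. {..<d}). of_bool (\<forall>i\<in>{..<t}. okc \<sigma> (inst i)))"
  proof -
    have "{\<sigma> \<in> PiE {..<n} (\<lambda>_. {..<d}). \<forall>i<t. restrict \<sigma> (fst (inst i)) \<notin> snd (inst i)}
       = PiE {..<n} (\<lambda>_. {..<d}) \<inter> {\<sigma>. \<forall>i\<in>{..<t}. okc \<sigma> (inst i)}" unfolding okc_def by auto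
    then show ?thesis unfolding rb_num_sol_def by (simp add: finite_PiE)
  qed
  also have "\<dots> = (\<Sum>\<sigma>\<in>PiE {..<n} (\<lambda>_. {..<d}). \<Prod>i\<in>{..<t}. of_bool (okc \<sigma> (inst i)))"
    by (simp add: of_bool_all_prod)
  finally show ?thesis .
qed

lemma num_sol_sq:
  "real (rb_num_sol n d t inst) ^ 2 = (\<Sum>\<sigma>\<in>PiE {..<n} (\<lambda>_. {..<d}). \<Sum>\<tau>\<in>PiE {..<n} (\<lambda>_. {..<d}).
      \<Prod>i\<in>{..<t}. of_bool (okc \<sigma> (inst i) \<and> okc \<tau> (inst i)))"
  unfolding num_sol_sum power2_eq_square sum_product
  by (simp add: prod.distrib[symmetric] of_bool_conj)

lemma exp_X:
  "measure_pmf.expectation (Pi_pmf {..<t} dflt (\<lambda>_. C)) (\<lambda>inst. real (rb_num_sol n d t inst))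
   = (\<Sum>\<sigma>\<in>PiE {..<n} (\<lambda>_. {..<d}). measure_pmf.expectation C (\<lambda>c. of_bool (okc \<sigma> c)) ^ t)"
  unfolding num_sol_sum
  by (subst Bochner_Integration.integral_sum) (auto intro: integrable_prod_ind simp: exp_prod_ind)

lemma exp_X2:
  "measure_pmf.expectation (Pi_pmf {..<t} dflt (\<lambda>_. C)) (\<lambda>inst. real (rb_num_sol n d t inst) ^ 2)
   = (\<Sum>\<sigma>\<in>PiE {..<n} (\<lambda>_. {..<d}). \<Sum>\<tau>\<in>PiE {..<n} (\<lambda>_. {..<d}).
        measure_pmf.expectation C (\<lambda>c. of_bool (okc \<sigma> c \<and> okc \<tau> c)) ^ t)"
  unfolding num_sol_sq
  apply (subst Bochner_Integration.integral_sum)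
   apply (rule Bochner_Integration.integrable_sum)
   apply (rule integrable_prod_ind)
  apply (rule sum.cong, rule refl)
  apply (subst Bochner_Integration.integral_sum)
   apply (rule integrable_prod_ind)
  apply (rule sum.cong, rule refl)
  apply (rule exp_prod_ind)
  done


lemma agree_set_card:
  assumes \<sigma>: "\<sigma> \<in> PiE {..<n} (\<lambda>_. {..<d::nat})" and B: "B \<subseteq> {..<n}"
  shows "card {\<tau> \<in> PiE {..<n} (\<lambda>_. {..<d}). {i\<in>{..<n}. \<sigma> i = \<tau> i} = B} = (d - 1) ^ (n - card B)"
proof -
  have eq: "{\<tau> \<in> PiE {..<n} (\<lambda>_. {..<d}). {i\<in>{..<n}. \<sigma> i = \<tau> i} = B}
     = PiE {..<n} (\<lambda>i. if i \<in> B then {\<sigma> i} else {..<d} - {\<sigma> i})"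
  proof (intro equalityI subsetI)
    fix \<tau> assume "\<tau> \<in> {\<tau> \<in> PiE {..<n} (\<lambda>_. {..<d}). {i\<in>{..<n}. \<sigma> i = \<tau> i} = B}"
    then show "\<tau> \<in> PiE {..<n} (\<lambda>i. if i \<in> B then {\<sigma> i} else {..<d} - {\<sigma> i})"
      by (auto simp: PiE_iff)
  next
    fix \<tau> assume h: "\<tau> \<in> PiE {..<n} (\<lambda>i. if i \<in> B then {\<sigma> i} else {..<d} - {\<sigma> i})"
    have "\<tau> \<in> PiE {..<n} (\<lambda>_. {..<d})" unfolding PiE_iff
    proof (intro conjI ballI)
      fix i assume i: "i \<in> {..<n}"
      then have "\<tau> i \<in> (if i \<in> B then {\<sigma> i} else {..<d} - {\<sigma> i})" using h by (auto simp: PiE_iff)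
      moreover have "\<sigma> i < d" using \<sigma> i by (auto simp: PiE_iff)
      ultimately show "\<tau> i \<in> {..<d}" by (auto split: if_splits)
    qed (use h in \<open>auto simp: PiE_iff\<close>)
    moreover have "{i\<in>{..<n}. \<sigma> i = \<tau> i} = B" using h B by (auto simp: PiE_iff split: if_splits)
    ultimately show "\<tau> \<in> {\<tau> \<in> PiE {..<n} (\<lambda>_. {..<d}). {i\<in>{..<n}. \<sigma> i = \<tau> i} = B}" by simp
  qed
  have c: "card (if i \<in> B then {\<sigma> i} else {..<d} - {\<sigma> i}) = (if i \<in> B then 1 else d - 1)" if "i < n" for i
    using \<sigma> that by (auto simp: PiE_iff)
  have "card (PiE {..<n} (\<lambda>i. if i \<in> B then {\<sigma> i} else {..<d} - {\<sigma> i})) = (\<Prod>i<n. if i \<in> B then 1 else d - 1)"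
    by (simp add: card_PiE c)
  also have "\<dots> = (\<Prod>i\<in>{..<n} - B. d - 1)"
    by (subst prod.If_cases) (auto simp: Diff_eq)
  also have "\<dots> = (d - 1) ^ (n - card B)" using B by (simp add: card_Diff_subset finite_subset)
  finally show ?thesis using eq by simp
qed

lemma pair_sum:
  fixes F :: "nat \<Rightarrow> real"
  assumes \<sigma>: "\<sigma> \<in> PiE {..<n} (\<lambda>_. {..<d::nat})"
  shows "(\<Sum>\<tau>\<in>PiE {..<n} (\<lambda>_. {..<d}). F (card {i\<in>{..<n}. \<sigma> i = \<tau> i}))
       = (\<Sum>S\<le>n. real (n choose S) * real (d - 1) ^ (n - S) * F S)"
proof -
  define Sig where "Sig = PiE {..<n} (\<lambda>_. {..<d})"
  define Ag where "Ag = (\<lambda>\<tau>. {i\<in>{..<n}. \<sigma> i = \<tau> i})"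
  have fSig: "finite Sig" unfolding Sig_def by (simp add: finite_PiE)
  have "(\<Sum>\<tau>\<in>Sig. F (card (Ag \<tau>))) = (\<Sum>B\<in>Pow {..<n}. \<Sum>\<tau>\<in>{\<tau>\<in>Sig. Ag \<tau> = B}. F (card (Ag \<tau>)))"
    by (rule sum.group[symmetric]) (auto simp: fSig Ag_def)
  also have "\<dots> = (\<Sum>B\<in>Pow {..<n}. real ((d - 1) ^ (n - card B)) * F (card B))"
  proof (rule sum.cong, rule refl)
    fix B assume B: "B \<in> Pow {..<n}"
    have "(\<Sum>\<tau>\<in>{\<tau>\<in>Sig. Ag \<tau> = B}. F (card (Ag \<tau>))) = (\<Sum>\<tau>\<in>{\<tau>\<in>Sig. Ag \<tau> = B}. F (card B))"
      by (rule sum.cong) auto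
    also have "\<dots> = real (card {\<tau>\<in>Sig. Ag \<tau> = B}) * F (card B)" by simp
    also have "card {\<tau>\<in>Sig. Ag \<tau> = B} = (d - 1) ^ (n - card B)"
      unfolding Sig_def Ag_def using agree_set_card[OF \<sigma>] B by simp
    finally show "(\<Sum>\<tau>\<in>{\<tau>\<in>Sig. Ag \<tau> = B}. F (card (Ag \<tau>))) = real ((d - 1) ^ (n - card B)) * F (card B)" .
  qed
  also have "\<dots> = (\<Sum>S\<in>{..n}. \<Sum>B\<in>{B\<in>Pow {..<n}. card B = S}. real ((d - 1) ^ (n - card B)) * F (card B))"
    by (rule sum.group[symmetric]) (auto intro: card_mono[of "{..<n}", simplified])
  also have "\<dots> = (\<Sum>S\<le>n. real (n choose S) * real (d - 1) ^ (n - S) * F S)"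
  proof (rule sum.cong, rule refl)
    fix S assume "S \<in> {..n}"
    have "(\<Sum>B\<in>{B\<in>Pow {..<n}. card B = S}. real ((d - 1) ^ (n - card B)) * F (card B))
        = (\<Sum>B\<in>{B\<in>Pow {..<n}. card B = S}. real ((d - 1) ^ (n - S)) * F S)"
      by (rule sum.cong) auto
    also have "\<dots> = real (card {B\<in>Pow {..<n}. card B = S}) * (real ((d - 1) ^ (n - S)) * F S)" by simp
    also have "card {B\<in>Pow {..<n}. card B = S} = n choose S"
      using n_subsets[of "{..<n}" S] by simp
    finally show "(\<Sum>B\<in>{B\<in>Pow {..<n}. card B = S}. real ((d - 1) ^ (n - card B)) * F (card B))
        = real (n choose S) * real (d - 1) ^ (n - S) * F S" by simp
  qed
  finally show ?thesis unfolding Sig_def Ag_def .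
qed


lemma R_identity:
  fixes N q c :: real
  assumes "N \<ge> 2" "q < N" "0 \<le> q"
  shows "(c * ((N - q) / N) + (1 - c) * ((N - q) * (N - q - 1) / (N * (N - 1)))) / ((N - q) / N) ^ 2
       = 1 + (q / N) / (1 - q / N) * ((c - 1 / N) / (1 - 1 / N))"
proof -
  have "N - q > 0" "N > 0" "N - 1 > 0" using assms by auto
  note pos = this
  have L: "(c * ((N - q) / N) + (1 - c) * ((N - q) * (N - q - 1) / (N * (N - 1)))) / ((N - q) / N) ^ 2
      = (c * N * (N - 1) + (1 - c) * N * (N - q - 1)) / ((N - 1) * (N - q))"
    using pos by (simp add: divide_simps power2_eq_square) (simp add: algebra_simps)
  have R: "1 + (q / N) / (1 - q / N) * ((c - 1 / N) / (1 - 1 / N))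
      = ((N - 1) * (N - q) + q * (c * N - 1)) / ((N - 1) * (N - q))"
    using pos by (simp add: divide_simps)
  have "c * N * (N - 1) + (1 - c) * N * (N - q - 1) = (N - 1) * (N - q) + q * (c * N - 1)"
    by (simp add: algebra_simps)
  then show ?thesis using L R by simp
qed

lemma exact_ratio:
  assumes kn: "k \<le> n" and k1: "1 \<le> k" and d: "d \<ge> 2" and q: "q < d ^ k"
  shows "measure_pmf.expectation (rb_instance_pmf n d k q t) (\<lambda>inst. real (rb_num_sol n d t inst) ^ 2)
         / (measure_pmf.expectation (rb_instance_pmf n d k q t) (\<lambda>inst. real (rb_num_sol n d t inst))) ^ 2
       = (\<Sum>S\<le>n. rb_B n d S * (1 + (real q / real d ^ k) / (1 - real q / real d ^ k)
            * ((real (S choose k) / real (n choose k) - (1 / real d) ^ k) / (1 - (1 / real d) ^ k))) ^ t)"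
proof -
  define N where "N = real d ^ k"
  define a1 where "a1 = (N - real q) / N"
  define a2 where "a2 = (N - real q) * (N - real q - 1) / (N * (N - 1))"
  define C where "C = rb_constraint_pmf n d k q"
  define Sig where "Sig = PiE {..<n} (\<lambda>_. {..<d})"
  define P where "P = (\<lambda>S. (real (S choose k) * a1 + (real (n choose k) - real (S choose k)) * a2) / real (n choose k))"
  have dk2: "d ^ k \<ge> 2"
  proof -
    have "d ^ 1 \<le> d ^ k" using k1 d by (intro power_increasing) auto
    then show ?thesis using d by simp
  qed
  have N2: "N \<ge> 2" unfolding N_def using dk2 by (metis of_nat_le_iff of_nat_numeral of_nat_power)
  have qN: "real q < N" unfolding N_def using q by (metis of_nat_less_iff of_nat_power)
  have cnk: "real (n choose k) > 0" using kn by simp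
  have cSig: "card Sig = d ^ n" unfolding Sig_def by (simp add: card_PiE)
  have e1: "measure_pmf.expectation C (\<lambda>c. of_bool (okc \<sigma> c)) = a1" if "\<sigma> \<in> Sig" for \<sigma>
  proof -
    have "{i\<in>{..<n}. \<sigma> i = \<sigma> i} = {..<n}" by auto
    then show ?thesis using constr_exp[OF kn less_imp_le[OF q] dk2, of \<sigma> \<sigma>] that cnk
      unfolding C_def Sig_def a1_def N_def by simp
  qed
  have e2: "measure_pmf.expectation C (\<lambda>c. of_bool (okc \<sigma> c \<and> okc \<tau> c)) = P (card {i\<in>{..<n}. \<sigma> i = \<tau> i})"
    if "\<sigma> \<in> Sig" "\<tau> \<in> Sig" for \<sigma> \<tau>
    using constr_exp[OF kn less_imp_le[OF q] dk2, of \<sigma> \<tau>] that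
    unfolding C_def Sig_def a1_def a2_def N_def P_def by simp
  have EX: "measure_pmf.expectation (rb_instance_pmf n d k q t) (\<lambda>inst. real (rb_num_sol n d t inst)) = real d ^ n * a1 ^ t"
    unfolding rb_instance_pmf_def exp_X C_def[symmetric] Sig_def[symmetric]
    using e1 cSig by simp
  have EX2: "measure_pmf.expectation (rb_instance_pmf n d k q t) (\<lambda>inst. real (rb_num_sol n d t inst) ^ 2)
     = real d ^ n * (\<Sum>S\<le>n. real (n choose S) * real (d - 1) ^ (n - S) * P S ^ t)"
  proof -
    have "measure_pmf.expectation (rb_instance_pmf n d k q t) (\<lambda>inst. real (rb_num_sol n d t inst) ^ 2)
        = (\<Sum>\<sigma>\<in>Sig. \<Sum>\<tau>\<in>Sig. P (card {i\<in>{..<n}. \<sigma> i = \<tau> i}) ^ t)"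
      unfolding rb_instance_pmf_def exp_X2 C_def[symmetric] Sig_def[symmetric]
      using e2 by simp
    also have "\<dots> = (\<Sum>\<sigma>\<in>Sig. \<Sum>S\<le>n. real (n choose S) * real (d - 1) ^ (n - S) * P S ^ t)"
      by (rule sum.cong, rule refl) (use pair_sum in \<open>auto simp: Sig_def\<close>)
    also have "\<dots> = real d ^ n * (\<Sum>S\<le>n. real (n choose S) * real (d - 1) ^ (n - S) * P S ^ t)"
      using cSig by simp
    finally show ?thesis .
  qed
  have a1pos: "a1 > 0" unfolding a1_def using N2 qN by simp
  have dpos: "real d > 0" using d by simp
  have trm: "real (n choose S) * real (d - 1) ^ (n - S) * P S ^ t / (real d ^ n * (a1 ^ t) ^ 2)
     = rb_B n d S * (1 + (real q / real d ^ k) / (1 - real q / real d ^ k)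
            * ((real (S choose k) / real (n choose k) - (1 / real d) ^ k) / (1 - (1 / real d) ^ k))) ^ t"
    if S: "S \<le> n" for S
  proof -
    have B: "rb_B n d S = real (n choose S) * real (d - 1) ^ (n - S) / real d ^ n"
    proof -
      have "(1 - 1 / real d) = real (d - 1) / real d" using d by (simp add: of_nat_diff field_simps)
      then have "rb_B n d S = real (n choose S) * (1 / real d) ^ S * (real (d - 1) ^ (n - S) / real d ^ (n - S))"
        unfolding rb_B_def by (simp add: power_divide)
      also have "\<dots> = real (n choose S) * real (d - 1) ^ (n - S) / (real d ^ S * real d ^ (n - S))"
        by (simp add: power_one_over field_simps)
      also have "real d ^ S * real d ^ (n - S) = real d ^ n" using S by (simp add: power_add[symmetric])
      finally show ?thesis .
    qed
    have PR: "P S / a1 ^ 2 = 1 + (real q / N) / (1 - real q / N) * ((real (S choose k) / real (n choose k) - 1 / N) / (1 - 1 / N))"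
    proof -
      have "P S = (real (S choose k) / real (n choose k)) * a1 + (1 - real (S choose k) / real (n choose k)) * a2"
        unfolding P_def using cnk by (simp add: field_simps)
      then have "P S / a1 ^ 2 = ((real (S choose k) / real (n choose k)) * a1 + (1 - real (S choose k) / real (n choose k)) * a2) / a1 ^ 2"
        by simp
      also have "\<dots> = 1 + (real q / N) / (1 - real q / N) * ((real (S choose k) / real (n choose k) - 1 / N) / (1 - 1 / N))"
        unfolding a1_def a2_def by (rule R_identity[OF N2 qN]) simp
      finally show ?thesis .
    qed
    have dk: "(1 / real d) ^ k = 1 / N" unfolding N_def by (simp add: power_one_over)
    have a12: "(a1 ^ t) ^ 2 = (a1 ^ 2) ^ t" by (metis power_mult mult.commute)
    have "P S ^ t / (a1 ^ t) ^ 2 = (P S / a1 ^ 2) ^ t" unfolding a12 by (simp add: power_divide)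
    also have "\<dots> = (1 + (real q / real d ^ k) / (1 - real q / real d ^ k)
            * ((real (S choose k) / real (n choose k) - (1 / real d) ^ k) / (1 - (1 / real d) ^ k))) ^ t"
      unfolding PR dk N_def ..
    finally have X: "P S ^ t / (a1 ^ t) ^ 2 = (1 + (real q / real d ^ k) / (1 - real q / real d ^ k)
            * ((real (S choose k) / real (n choose k) - (1 / real d) ^ k) / (1 - (1 / real d) ^ k))) ^ t" .
    have "real (n choose S) * real (d - 1) ^ (n - S) * P S ^ t / (real d ^ n * (a1 ^ t) ^ 2)
       = (real (n choose S) * real (d - 1) ^ (n - S) / real d ^ n) * (P S ^ t / (a1 ^ t) ^ 2)"
      by (rule times_divide_times_eq[symmetric])
    then show ?thesis using B X by simp
  qed
  have "(real d ^ n * (\<Sum>S\<le>n. real (n choose S) * real (d - 1) ^ (n - S) * P S ^ t)) / (real d ^ n * a1 ^ t) ^ 2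
      = (\<Sum>S\<le>n. real (n choose S) * real (d - 1) ^ (n - S) * P S ^ t) / (real d ^ n * (a1 ^ t) ^ 2)"
    using dpos by (simp add: power2_eq_square)
  also have "\<dots> = (\<Sum>S\<le>n. real (n choose S) * real (d - 1) ^ (n - S) * P S ^ t / (real d ^ n * (a1 ^ t) ^ 2))"
    by (rule sum_divide_distrib)
  also have "\<dots> = (\<Sum>S\<le>n. rb_B n d S * (1 + (real q / real d ^ k) / (1 - real q / real d ^ k)
            * ((real (S choose k) / real (n choose k) - (1 / real d) ^ k) / (1 - (1 / real d) ^ k))) ^ t)"
    by (rule sum.cong[OF refl], rule trm) simp
  finally show ?thesis unfolding EX EX2 .
qed


lemma sum_lessThan_real: "(\<Sum>i<k. real i) = real k * (real k - 1) / 2"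
  by (induction k) (auto simp: field_simps)

lemma prod_expand:
  fixes x :: real and a :: "nat \<Rightarrow> real"
  assumes x: "0 \<le> x" "x \<le> 1" and a: "\<And>i. i < m \<Longrightarrow> 0 \<le> a i \<and> a i \<le> 1"
  shows "\<bar>(\<Prod>i<m. (x - a i)) - x ^ m + (\<Sum>i<m. a i) * x ^ (m - 1)\<bar> \<le> (\<Sum>i<m. a i) ^ 2"
  using a
proof (induction m)
  case 0
  then show ?case by simp
next
  case (Suc m)
  define s where "s = (\<Sum>i<m. a i)"
  define E where "E = (\<Prod>i<m. (x - a i)) - x ^ m + s * x ^ (m - 1)"
  have IH: "\<bar>E\<bar> \<le> s ^ 2" unfolding E_def s_def using Suc by auto
  have am: "0 \<le> a m" "a m \<le> 1" using Suc.prems by auto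
  have s0: "s \<ge> 0" unfolding s_def using Suc.prems by (auto intro: sum_nonneg)
  show ?case
  proof (cases "m = 0")
    case True
    then show ?thesis by simp
  next
    case False
    have xm: "x * x ^ (m - 1) = x ^ m" using False by (simp add: power_eq_if)
    have eq: "(\<Prod>i<Suc m. (x - a i)) - x ^ Suc m + (\<Sum>i<Suc m. a i) * x ^ (Suc m - 1)
       = (x - a m) * E + a m * s * x ^ (m - 1)"
    proof -
      have "(\<Prod>i<Suc m. (x - a i)) = (x - a m) * (x ^ m - s * x ^ (m - 1) + E)"
        unfolding E_def by simp
      moreover have "(\<Sum>i<Suc m. a i) = s + a m" unfolding s_def by simp
      ultimately show ?thesis using xm by (simp add: algebra_simps)
    qed
    have b1: "\<bar>x - a m\<bar> \<le> 1" using x am by auto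
    have b2: "0 \<le> x ^ (m - 1)" "x ^ (m - 1) \<le> 1" using x by (auto intro: power_le_one)
    have "\<bar>(x - a m) * E\<bar> \<le> s ^ 2"
    proof -
      have "\<bar>(x - a m) * E\<bar> = \<bar>x - a m\<bar> * \<bar>E\<bar>" by (simp add: abs_mult)
      also have "\<dots> \<le> 1 * \<bar>E\<bar>" using b1 by (intro mult_right_mono) auto
      finally show ?thesis using IH by simp
    qed
    moreover have "\<bar>a m * s * x ^ (m - 1)\<bar> \<le> a m * s"
    proof -
      have "\<bar>a m * s * x ^ (m - 1)\<bar> = a m * s * x ^ (m - 1)" using am s0 b2 by simp
      also have "\<dots> \<le> a m * s * 1" using am s0 b2 by (intro mult_left_mono) auto
      finally show ?thesis by simp
    qed
    ultimately have "\<bar>(x - a m) * E + a m * s * x ^ (m - 1)\<bar> \<le> s ^ 2 + a m * s" by linarith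
    also have "\<dots> \<le> (s + a m) ^ 2" using am s0 by (simp add: power2_eq_square algebra_simps)
    finally show ?thesis using eq unfolding s_def by simp
  qed
qed

lemma c_approx_alg:
  fixes P Q x \<sigma> E1 E2 :: real
  assumes k: "k \<ge> 1" and x: "0 \<le> x" "x \<le> 1" and \<sigma>: "0 \<le> \<sigma>" "\<sigma> \<le> 1/4"
    and P: "P = x ^ k - \<sigma> * x ^ (k - 1) + E1" "\<bar>E1\<bar> \<le> \<sigma>\<^sup>2"
    and Q: "Q = 1 - \<sigma> + E2" "\<bar>E2\<bar> \<le> \<sigma>\<^sup>2"
  shows "\<bar>P / Q - (x ^ k - \<sigma> * (1 - x) * x ^ (k - 1))\<bar> \<le> 6 * \<sigma>\<^sup>2"
proof -
  define T where "T = x ^ k - \<sigma> * (1 - x) * x ^ (k - 1)"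
  have xk: "x ^ k = x * x ^ (k - 1)" using k by (simp add: power_eq_if)
  have y: "0 \<le> x ^ (k - 1)" "x ^ (k - 1) \<le> 1" using x by (auto intro: power_le_one)
  have z: "0 \<le> (1 - x) * x ^ (k - 1)" "(1 - x) * x ^ (k - 1) \<le> 1"
  proof -
    show "0 \<le> (1 - x) * x ^ (k - 1)" using x y by simp
    have "(1 - x) * x ^ (k - 1) \<le> 1 * 1" using x y by (intro mult_mono) auto
    then show "(1 - x) * x ^ (k - 1) \<le> 1" by simp
  qed
  have xk1: "0 \<le> x ^ k" "x ^ k \<le> 1" using x by (auto intro: power_le_one)
  have Tb: "\<bar>T\<bar> \<le> 1"
  proof -
    have "\<sigma> * ((1 - x) * x ^ (k - 1)) \<le> 1/4 * 1" using \<sigma> z by (intro mult_mono) auto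
    moreover have "0 \<le> \<sigma> * ((1 - x) * x ^ (k - 1))" using \<sigma> z by simp
    ultimately show ?thesis unfolding T_def using xk1 by (auto simp: mult.assoc)
  qed
  have eq: "P - T * Q = E1 - \<sigma>\<^sup>2 * ((1 - x) * x ^ (k - 1)) - T * E2"
    unfolding P Q T_def using xk by (simp add: algebra_simps power2_eq_square)
  have "\<bar>\<sigma>\<^sup>2 * ((1 - x) * x ^ (k - 1))\<bar> \<le> \<sigma>\<^sup>2"
  proof -
    have "\<bar>\<sigma>\<^sup>2 * ((1 - x) * x ^ (k - 1))\<bar> = \<sigma>\<^sup>2 * ((1 - x) * x ^ (k - 1))" using z by simp
    also have "\<dots> \<le> \<sigma>\<^sup>2 * 1" using z by (intro mult_left_mono) auto
    finally show ?thesis by simp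
  qed
  moreover have "\<bar>T * E2\<bar> \<le> \<sigma>\<^sup>2"
  proof -
    have "\<bar>T * E2\<bar> = \<bar>T\<bar> * \<bar>E2\<bar>" by (simp add: abs_mult)
    also have "\<dots> \<le> 1 * \<sigma>\<^sup>2" using Tb Q by (intro mult_mono) auto
    finally show ?thesis by simp
  qed
  ultimately have num: "\<bar>P - T * Q\<bar> \<le> 3 * \<sigma>\<^sup>2" using eq P by linarith
  have Qpos: "Q \<ge> 1/2"
  proof -
    have "\<sigma>\<^sup>2 \<le> (1/4)\<^sup>2" using \<sigma> by (intro power_mono) auto
    then have "\<sigma>\<^sup>2 \<le> 1/16" by (simp add: power2_eq_square)
    then show ?thesis using Q \<sigma> by linarith
  qed
  have "P / Q - T = (P - T * Q) / Q" using Qpos by (simp add: field_simps)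
  then have "\<bar>P / Q - T\<bar> = \<bar>P - T * Q\<bar> / Q" using Qpos by simp
  also have "\<dots> \<le> (3 * \<sigma>\<^sup>2) / (1/2)" using num Qpos by (intro frac_le) auto
  finally show ?thesis unfolding T_def by simp
qed


lemma choose_prod_real: "real (S choose k) = (\<Prod>i<k. real S - real i) / fact k"
  by (simp add: binomial_gbinomial gbinomial_prod_rev atLeast0LessThan)

lemma c_bound:
  assumes k: "k \<ge> 1" "k \<le> n" and S: "S \<le> n"
    and \<sigma>: "\<sigma> = real k * (real k - 1) / (2 * real n)" "\<sigma> \<le> 1/4"
  shows "\<bar>real (S choose k) / real (n choose k) - ((real S / real n) ^ k + rb_g k (real S / real n) / real n)\<bar> \<le> 6 * \<sigma>\<^sup>2"
proof -
  define x where "x = real S / real n"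
  define a where "a = (\<lambda>i::nat. real i / real n)"
  have npos: "real n > 0" using k by simp
  have x01: "0 \<le> x" "x \<le> 1" unfolding x_def using S npos by (auto simp: field_simps)
  have a01: "0 \<le> a i \<and> a i \<le> 1" if "i < k" for i unfolding a_def using that k npos by (auto simp: field_simps)
  have sa: "(\<Sum>i<k. a i) = \<sigma>" unfolding a_def \<sigma> by (simp add: sum_divide_distrib[symmetric] sum_lessThan_real)
  have \<sigma>0: "\<sigma> \<ge> 0" using \<sigma> k by simp
  have prodS: "(\<Prod>i<k. real S - real i) = real n ^ k * (\<Prod>i<k. x - a i)"
  proof -
    have "(\<Prod>i<k. real S - real i) = (\<Prod>i<k. real n * (x - a i))"
      by (rule prod.cong) (use npos in \<open>auto simp: x_def a_def field_simps\<close>)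
    also have "\<dots> = real n ^ k * (\<Prod>i<k. x - a i)" by (simp add: prod.distrib)
    finally show ?thesis .
  qed
  have prodN: "(\<Prod>i<k. real n - real i) = real n ^ k * (\<Prod>i<k. 1 - a i)"
  proof -
    have "(\<Prod>i<k. real n - real i) = (\<Prod>i<k. real n * (1 - a i))"
      by (rule prod.cong) (use npos in \<open>auto simp: a_def field_simps\<close>)
    also have "\<dots> = real n ^ k * (\<Prod>i<k. 1 - a i)" by (simp add: prod.distrib)
    finally show ?thesis .
  qed
  have cn: "real (n choose k) > 0" using k by simp
  have c: "real (S choose k) / real (n choose k) = (\<Prod>i<k. x - a i) / (\<Prod>i<k. 1 - a i)"
  proof -
    have "real (S choose k) / real (n choose k) = (\<Prod>i<k. real S - real i) / (\<Prod>i<k. real n - real i)"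
      unfolding choose_prod_real by (simp add: fact_nonzero)
    also have "\<dots> = (\<Prod>i<k. x - a i) / (\<Prod>i<k. 1 - a i)" unfolding prodS prodN using npos by simp
    finally show ?thesis .
  qed
  have E1: "\<bar>(\<Prod>i<k. x - a i) - x ^ k + \<sigma> * x ^ (k - 1)\<bar> \<le> \<sigma>\<^sup>2"
    using prod_expand[OF x01, of k a] a01 sa by simp
  have E2: "\<bar>(\<Prod>i<k. 1 - a i) - 1 + \<sigma>\<bar> \<le> \<sigma>\<^sup>2"
    using prod_expand[of 1 k a] a01 sa by simp
  have main: "\<bar>(\<Prod>i<k. x - a i) / (\<Prod>i<k. 1 - a i) - (x ^ k - \<sigma> * (1 - x) * x ^ (k - 1))\<bar> \<le> 6 * \<sigma>\<^sup>2"
    by (rule c_approx_alg[OF k(1) x01 \<sigma>0 \<sigma>(2) _ E1 _ E2]) simp_all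
  have g: "x ^ k + rb_g k x / real n = x ^ k - \<sigma> * (1 - x) * x ^ (k - 1)"
    unfolding rb_g_def \<sigma> using npos by (simp add: field_simps)
  show ?thesis using main unfolding c x_def[symmetric] g .
qed


lemma sum_ratio_bound:
  fixes w A R :: "nat \<Rightarrow> real" and \<delta> :: real
  assumes w: "\<And>S. S \<le> n \<Longrightarrow> w S \<ge> 0" and A: "\<And>S. S \<le> n \<Longrightarrow> A S \<ge> 0"
    and RA: "\<And>S. S \<le> n \<Longrightarrow> (1 - \<delta>) * A S \<le> R S \<and> R S \<le> (1 + \<delta>) * A S"
    and \<delta>: "0 \<le> \<delta>" "\<delta> \<le> 1" and pos: "(\<Sum>S\<le>n. w S * A S ^ t) > 0"
  shows "\<bar>(\<Sum>S\<le>n. w S * R S ^ t) / (\<Sum>S\<le>n. w S * A S ^ t) - 1\<bar> \<le> exp (real t * \<delta>) - 1"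
proof -
  define SA where "SA = (\<Sum>S\<le>n. w S * A S ^ t)"
  define SR where "SR = (\<Sum>S\<le>n. w S * R S ^ t)"
  have lo: "(1 - \<delta>) ^ t * SA \<le> SR"
  proof -
    have "(1 - \<delta>) ^ t * SA = (\<Sum>S\<le>n. w S * ((1 - \<delta>) * A S) ^ t)"
      unfolding SA_def by (simp add: sum_distrib_left power_mult_distrib mult_ac)
    also have "\<dots> \<le> SR" unfolding SR_def
    proof (rule sum_mono)
      fix S assume "S \<in> {..n}"
      then have S: "S \<le> n" by simp
      have "((1 - \<delta>) * A S) ^ t \<le> R S ^ t" using RA[OF S] A[OF S] \<delta> by (intro power_mono) auto
      then show "w S * ((1 - \<delta>) * A S) ^ t \<le> w S * R S ^ t" using w[OF S] by (rule mult_left_mono)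
    qed
    finally show ?thesis .
  qed
  have hi: "SR \<le> (1 + \<delta>) ^ t * SA"
  proof -
    have "SR \<le> (\<Sum>S\<le>n. w S * ((1 + \<delta>) * A S) ^ t)" unfolding SR_def
    proof (rule sum_mono)
      fix S assume "S \<in> {..n}"
      then have S: "S \<le> n" by simp
      have "R S \<ge> 0" using RA[OF S] A[OF S] \<delta> by (meson diff_ge_0_iff_ge mult_nonneg_nonneg order_trans)
      then have "R S ^ t \<le> ((1 + \<delta>) * A S) ^ t" using RA[OF S] by (intro power_mono) auto
      then show "w S * R S ^ t \<le> w S * ((1 + \<delta>) * A S) ^ t" using w[OF S] by (rule mult_left_mono)
    qed
    also have "\<dots> = (1 + \<delta>) ^ t * SA"
      unfolding SA_def by (simp add: sum_distrib_left power_mult_distrib mult_ac)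
    finally show ?thesis .
  qed
  have SApos: "SA > 0" using pos unfolding SA_def .
  have r1: "(1 - \<delta>) ^ t \<le> SR / SA" using lo SApos by (simp add: field_simps)
  have r2: "SR / SA \<le> (1 + \<delta>) ^ t" using hi SApos by (simp add: field_simps)
  have b1: "(1 + \<delta>) ^ t \<le> exp (real t * \<delta>)"
  proof -
    have "(1 + \<delta>) ^ t \<le> exp \<delta> ^ t" using \<delta> by (intro power_mono) auto
    then show ?thesis by (simp add: exp_of_nat_mult)
  qed
  have b2: "1 - real t * \<delta> \<le> (1 - \<delta>) ^ t"
    using Bernoulli_inequality[of "-\<delta>" t] \<delta> by simp
  have b3: "1 + real t * \<delta> \<le> exp (real t * \<delta>)" by (rule exp_ge_add_one_self)
  have "\<bar>SR / SA - 1\<bar> \<le> exp (real t * \<delta>) - 1" unfolding abs_le_iff using r1 r2 b1 b2 b3 by linarith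
  then show ?thesis unfolding SA_def SR_def .
qed


lemma core:
  fixes n d k t :: nat and p pp \<sigma> b :: real
  assumes k1: "1 \<le> k" and kn: "k \<le> n" and d2: "d \<ge> 2" and p: "0 < p" "p < 1"
    and pp: "0 \<le> pp" "pp \<le> p"
    and \<sigma>: "\<sigma> = real k * (real k - 1) / (2 * real n)" "\<sigma> \<le> 1/4"
    and b: "b = 2 * p / (1 - p)" and b\<sigma>: "b * \<sigma> \<le> 1/4" and bd: "b / real d \<le> 1/4"
  shows "(\<Sum>S\<le>n. rb_B n d S * (rb_f pp d k (real S / real n)
               + pp * rb_g k (real S / real n) / ((1 - pp) * (1 - (1 / real d) ^ k) * real n)) ^ t) > 0"
    and "\<bar>(\<Sum>S\<le>n. rb_B n d S * (1 + pp / (1 - pp)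
            * ((real (S choose k) / real (n choose k) - (1 / real d) ^ k) / (1 - (1 / real d) ^ k))) ^ t)
         / (\<Sum>S\<le>n. rb_B n d S * (rb_f pp d k (real S / real n)
               + pp * rb_g k (real S / real n) / ((1 - pp) * (1 - (1 / real d) ^ k) * real n)) ^ t) - 1\<bar>
         \<le> exp (real t * (12 * b * \<sigma>\<^sup>2)) - 1"
    and "(\<Sum>S\<le>n. rb_B n d S * (rb_f pp d k (real S / real n)
               + pp * rb_g k (real S / real n) / ((1 - pp) * (1 - (1 / real d) ^ k) * real n)) ^ t)
         \<le> (\<Sum>S\<le>n. rb_B n d S * rb_f pp d k (real S / real n) ^ t)"
proof -
  define e where "e = (1 / real d) ^ k"
  define x where "x = (\<lambda>S::nat. real S / real n)"
  define c where "c = (\<lambda>S::nat. real (S choose k) / real (n choose k))"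
  define T where "T = (\<lambda>S. x S ^ k + rb_g k (x S) / real n)"
  define \<beta> where "\<beta> = pp / (1 - pp) / (1 - e)"
  define R where "R = (\<lambda>S. 1 + pp / (1 - pp) * ((c S - e) / (1 - e)))"
  define A where "A = (\<lambda>S. rb_f pp d k (x S) + pp * rb_g k (x S) / ((1 - pp) * (1 - e) * real n))"
  define w where "w = rb_B n d"
  have npos: "real n > 0" using k1 kn by simp
  have dpos: "real d \<ge> 2" using d2 by simp
  have e0: "0 \<le> e" unfolding e_def by simp
  have ed: "e \<le> 1 / real d"
  proof -
    have "(1 / real d) ^ k \<le> (1 / real d) ^ 1" using dpos k1 by (intro power_decreasing) auto
    then show ?thesis unfolding e_def by simp
  qed
  have e2: "e \<le> 1/2"
  proof -
    have "1 / real d \<le> 1/2" using dpos by (simp add: field_simps)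
    then show ?thesis using ed by linarith
  qed
  have ppl: "1 - pp \<ge> 1 - p" "1 - p > 0" using pp p by auto
  have b0: "b \<ge> 0" unfolding b using p by simp
  have \<beta>0: "\<beta> \<ge> 0" unfolding \<beta>_def using pp ppl e2 by simp
  have \<beta>b: "\<beta> \<le> b"
  proof -
    have "pp / (1 - pp) \<le> p / (1 - p)" using pp ppl by (intro frac_le) auto
    moreover have "1 / (1 - e) \<le> 2" using e2 e0 by (simp add: field_simps)
    ultimately have "pp / (1 - pp) * (1 / (1 - e)) \<le> p / (1 - p) * 2"
      using pp ppl e2 by (intro mult_mono) auto
    then show ?thesis unfolding \<beta>_def b by (simp add: mult.commute)
  qed
  have \<sigma>0: "\<sigma> \<ge> 0" using \<sigma> k1 by simp
  have x01: "0 \<le> x S" "x S \<le> 1" if "S \<le> n" for S unfolding x_def using that npos by (auto simp: field_simps)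
  have gform: "rb_g k (x S) / real n = - \<sigma> * ((1 - x S) * x S ^ (k - 1))" for S
    unfolding rb_g_def \<sigma> using npos by (simp add: field_simps)
  have z: "0 \<le> (1 - x S) * x S ^ (k - 1)" "(1 - x S) * x S ^ (k - 1) \<le> 1" if "S \<le> n" for S
  proof -
    show "0 \<le> (1 - x S) * x S ^ (k - 1)" using x01[OF that] by simp
    have "(1 - x S) * x S ^ (k - 1) \<le> 1 * 1" using x01[OF that] by (intro mult_mono) (auto intro: power_le_one)
    then show "(1 - x S) * x S ^ (k - 1) \<le> 1" by simp
  qed
  have Rform: "R S = 1 + \<beta> * (c S - e)" for S
    unfolding R_def \<beta>_def by simp
  have Aform: "A S = 1 + \<beta> * (T S - e)" for S
  proof -
    define D where "D = (1 - pp) * (1 - e)"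
    have D0: "D > 0" unfolding D_def using ppl e2 by simp
    have \<beta>D: "\<beta> = pp / D" unfolding \<beta>_def D_def by simp
    have h1: "pp / (1 - pp) * ((x S ^ k - e) / (1 - e)) = pp / D * (x S ^ k - e)" unfolding D_def by simp
    have h2: "pp * rb_g k (x S) / ((1 - pp) * (1 - e) * real n) = pp / D * (rb_g k (x S) / real n)"
      unfolding D_def by simp
    have "A S = 1 + pp / D * (x S ^ k - e) + pp / D * (rb_g k (x S) / real n)"
      unfolding A_def rb_f_def e_def[symmetric] h1[symmetric] h2[symmetric] by simp
    also have "\<dots> = 1 + \<beta> * (T S - e)" unfolding \<beta>D T_def by (simp add: algebra_simps)
    finally show ?thesis .
  qed
  have Tlow: "T S \<ge> - \<sigma>" if "S \<le> n" for S
  proof -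
    have "\<sigma> * ((1 - x S) * x S ^ (k - 1)) \<le> \<sigma> * 1" using z[OF that] \<sigma>0 by (intro mult_left_mono) auto
    moreover have "x S ^ k \<ge> 0" using x01[OF that] by simp
    ultimately show ?thesis unfolding T_def gform by simp
  qed
  have Ahalf: "A S \<ge> 1/2" if "S \<le> n" for S
  proof -
    have "\<beta> * (\<sigma> + e) \<le> b * (\<sigma> + e)" using \<beta>b \<sigma>0 e0 by (intro mult_right_mono) auto
    moreover have "b * e \<le> b * (1 / real d)" using ed b0 by (intro mult_left_mono)
    moreover have "\<beta> * (T S - e) \<ge> \<beta> * (- (\<sigma> + e))" using Tlow[OF that] \<beta>0 by (intro mult_left_mono) auto
    ultimately have "\<beta> * (T S - e) \<ge> - (b * \<sigma> + b * (1 / real d))"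
      by (simp add: algebra_simps)
    moreover have "b * (1 / real d) \<le> 1/4" using bd by simp
    ultimately show ?thesis unfolding Aform using b\<sigma> by linarith
  qed
  have cT: "\<bar>c S - T S\<bar> \<le> 6 * \<sigma>\<^sup>2" if "S \<le> n" for S
    unfolding c_def T_def x_def using c_bound[OF k1 kn that \<sigma>] .
  define \<delta> where "\<delta> = 12 * b * \<sigma>\<^sup>2"
  have \<delta>0: "\<delta> \<ge> 0" unfolding \<delta>_def using b0 by simp
  have \<delta>1: "\<delta> \<le> 1"
  proof -
    have "\<delta> = 12 * (b * \<sigma>) * \<sigma>" unfolding \<delta>_def by (simp add: power2_eq_square)
    also have "\<dots> \<le> 12 * (1/4) * (1/4)" using b\<sigma> \<sigma>(2) \<sigma>0 b0 mult_nonneg_nonneg[OF b0 \<sigma>0] by (intro mult_mono) auto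
    finally show ?thesis by simp
  qed
  have RA: "(1 - \<delta>) * A S \<le> R S \<and> R S \<le> (1 + \<delta>) * A S" if S: "S \<le> n" for S
  proof -
    have "R S - A S = \<beta> * (c S - T S)" unfolding Rform Aform by (simp add: algebra_simps)
    then have "\<bar>R S - A S\<bar> = \<beta> * \<bar>c S - T S\<bar>" using \<beta>0 by (simp add: abs_mult)
    also have "\<dots> \<le> b * (6 * \<sigma>\<^sup>2)" using \<beta>b \<beta>0 cT[OF S] by (intro mult_mono) auto
    also have "\<dots> = \<delta> * (1/2)" unfolding \<delta>_def by simp
    also have "\<dots> \<le> \<delta> * A S" using Ahalf[OF S] \<delta>0 by (intro mult_left_mono)
    finally have h: "\<bar>R S - A S\<bar> \<le> \<delta> * A S" .
    have l: "A S - \<delta> * A S \<le> R S" and u: "R S \<le> A S + \<delta> * A S" using h unfolding abs_le_iff by linarith+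
    show ?thesis using l u by (simp add: left_diff_distrib distrib_right)
  qed
  have w0: "w S \<ge> 0" for S unfolding w_def rb_B_def using dpos by simp
  have A0: "A S \<ge> 0" if "S \<le> n" for S using Ahalf[OF that] by simp
  have pos: "(\<Sum>S\<le>n. w S * A S ^ t) > 0"
  proof (rule sum_pos2[of _ 0])
    have "w 0 > 0" unfolding w_def rb_B_def using dpos by simp
    moreover have "A 0 ^ t > 0" using Ahalf[of 0] by simp
    ultimately show "0 < w 0 * A 0 ^ t" by simp
  qed (use w0 A0 in auto)
  show "(\<Sum>S\<le>n. rb_B n d S * (rb_f pp d k (real S / real n)
               + pp * rb_g k (real S / real n) / ((1 - pp) * (1 - (1 / real d) ^ k) * real n)) ^ t) > 0"
    using pos unfolding w_def A_def x_def e_def .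
  show "\<bar>(\<Sum>S\<le>n. rb_B n d S * (1 + pp / (1 - pp)
            * ((real (S choose k) / real (n choose k) - (1 / real d) ^ k) / (1 - (1 / real d) ^ k))) ^ t)
         / (\<Sum>S\<le>n. rb_B n d S * (rb_f pp d k (real S / real n)
               + pp * rb_g k (real S / real n) / ((1 - pp) * (1 - (1 / real d) ^ k) * real n)) ^ t) - 1\<bar>
         \<le> exp (real t * (12 * b * \<sigma>\<^sup>2)) - 1"
    using sum_ratio_bound[of n w A \<delta> R t, OF w0 A0 RA \<delta>0 \<delta>1 pos]
    unfolding w_def A_def R_def x_def e_def c_def \<delta>_def .
  have AF: "A S \<le> rb_f pp d k (x S)" if "S \<le> n" for S
  proof -
    have g: "rb_g k (x S) \<le> 0"
    proof -
      have "0 \<le> real k * (real k - 1) / 2" using k1 by simp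
      moreover have "0 \<le> (1 - x S) * x S ^ (k - 1)" using z[OF that] by simp
      ultimately have "0 \<le> real k * (real k - 1) / 2 * ((1 - x S) * x S ^ (k - 1))" by simp
      then show ?thesis unfolding rb_g_def by (simp add: mult.assoc)
    qed
    have D: "(1 - pp) * (1 - e) * real n > 0" using ppl e2 npos by simp
    have "pp * rb_g k (x S) / ((1 - pp) * (1 - e) * real n) \<le> 0"
      by (rule divide_nonpos_pos[OF mult_nonneg_nonpos[OF pp(1) g] D])
    then show ?thesis unfolding A_def by simp
  qed
  have "(\<Sum>S\<le>n. w S * A S ^ t) \<le> (\<Sum>S\<le>n. w S * rb_f pp d k (x S) ^ t)"
  proof (rule sum_mono)
    fix S assume "S \<in> {..n}"
    then have S: "S \<le> n" by simp
    have "A S ^ t \<le> rb_f pp d k (x S) ^ t" by (rule power_mono[OF AF[OF S] A0[OF S]])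
    then show "w S * A S ^ t \<le> w S * rb_f pp d k (x S) ^ t" by (rule mult_left_mono[OF _ w0])
  qed
  then show "(\<Sum>S\<le>n. rb_B n d S * (rb_f pp d k (real S / real n)
               + pp * rb_g k (real S / real n) / ((1 - pp) * (1 - (1 / real d) ^ k) * real n)) ^ t)
         \<le> (\<Sum>S\<le>n. rb_B n d S * rb_f pp d k (real S / real n) ^ t)"
    unfolding w_def A_def x_def e_def .
qed


lemma nat_floor_le: "0 \<le> y \<Longrightarrow> real (nat \<lfloor>y\<rfloor>) \<le> y"
  by (simp add: of_nat_nat)

lemma nat_floor_gt: "0 \<le> y \<Longrightarrow> real (nat \<lfloor>y\<rfloor>) > y - 1"
  by (simp add: of_nat_nat)

lemma pointwise:
  fixes \<alpha> r p b :: real and k n :: nat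
  assumes \<alpha>: "\<alpha> > 0" and r: "r > 0" and k: "k \<ge> 2" and p: "0 < p" "p < 1"
    and b: "b = 2 * p / (1 - p)" and kn: "k \<le> n" and nb: "4 * real k ^ 2 * (b + 1) \<le> real n"
    and na: "real n powr \<alpha> \<ge> max 2 (4 * b) + 1"
  shows "(\<Sum>S\<le>n. rb_B n (rb_d \<alpha> n) S *
              (rb_f (rb_p \<alpha> k p n) (rb_d \<alpha> n) k (real S / real n)
               + rb_p \<alpha> k p n * rb_g k (real S / real n)
                 / ((1 - rb_p \<alpha> k p n) * (1 - (1 / real (rb_d \<alpha> n)) ^ k) * real n)) ^ rb_t \<alpha> r n) > 0"
    and "\<bar>rb_moment_ratio \<alpha> r k p n / (\<Sum>S\<le>n. rb_B n (rb_d \<alpha> n) S *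
              (rb_f (rb_p \<alpha> k p n) (rb_d \<alpha> n) k (real S / real n)
               + rb_p \<alpha> k p n * rb_g k (real S / real n)
                 / ((1 - rb_p \<alpha> k p n) * (1 - (1 / real (rb_d \<alpha> n)) ^ k) * real n)) ^ rb_t \<alpha> r n) - 1\<bar>
         \<le> exp (12 * b * real k ^ 4 * r * \<alpha> * (ln (real n) / real n)) - 1"
    and "(\<Sum>S\<le>n. rb_B n (rb_d \<alpha> n) S *
              (rb_f (rb_p \<alpha> k p n) (rb_d \<alpha> n) k (real S / real n)
               + rb_p \<alpha> k p n * rb_g k (real S / real n)
                 / ((1 - rb_p \<alpha> k p n) * (1 - (1 / real (rb_d \<alpha> n)) ^ k) * real n)) ^ rb_t \<alpha> r n)
         \<le> (\<Sum>S\<le>n. rb_B n (rb_d \<alpha> n) S *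
              rb_f (rb_p \<alpha> k p n) (rb_d \<alpha> n) k (real S / real n) ^ rb_t \<alpha> r n)"
proof -
  define d where "d = rb_d \<alpha> n"
  define t where "t = rb_t \<alpha> r n"
  define q where "q = rb_q \<alpha> k p n"
  define pp where "pp = rb_p \<alpha> k p n"
  define \<sigma> where "\<sigma> = real k * (real k - 1) / (2 * real n)"
  have n1: "n \<ge> 1" using k kn by simp
  have npos: "real n > 0" using n1 by simp
  have b0: "b \<ge> 0" unfolding b using p by simp
  have powr0: "real n powr \<alpha> \<ge> 0" by simp
  have dlo: "real d > real n powr \<alpha> - 1" unfolding d_def rb_d_def by (rule nat_floor_gt[OF powr0])
  have dhi: "real d \<le> real n powr \<alpha>" unfolding d_def rb_d_def by (rule nat_floor_le[OF powr0])
  have dM: "real d \<ge> max 2 (4 * b)" using dlo na by linarith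
  have d2: "d \<ge> 2" using dM by simp
  have dpos: "real d > 0" using d2 by simp
  have bd: "b / real d \<le> 1/4" using dM dpos by (simp add: divide_le_eq)
  have \<sigma>k: "\<sigma> \<le> real k ^ 2 / real n"
  proof -
    have "real k * (real k - 1) / 2 \<le> real k ^ 2" by (simp add: power2_eq_square field_simps)
    moreover have "\<sigma> = (real k * (real k - 1) / 2) / real n" unfolding \<sigma>_def by simp
    ultimately show ?thesis using npos divide_right_mono[of "real k * (real k - 1) / 2" "real k ^ 2" "real n"]
      by (simp only:)
  qed
  have \<sigma>0: "\<sigma> \<ge> 0" unfolding \<sigma>_def using k by simp
  have kb: "real k ^ 2 / real n \<le> 1 / (4 * (b + 1))"
    using nb npos b0 by (simp add: field_simps)
  have b1\<sigma>: "(b + 1) * \<sigma> \<le> 1/4"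
  proof -
    have "(b + 1) * \<sigma> \<le> (b + 1) * (1 / (4 * (b + 1)))" using \<sigma>k kb b0 by (intro mult_left_mono) auto
    also have "\<dots> = 1/4" using b0 by simp
    finally show ?thesis .
  qed
  have \<sigma>4: "\<sigma> \<le> 1/4" using b1\<sigma> b0 \<sigma>0 by (simp add: algebra_simps) (smt (verit) mult_nonneg_nonneg)
  have b\<sigma>: "b * \<sigma> \<le> 1/4" using b1\<sigma> \<sigma>0 by (simp add: algebra_simps)
  have dk: "real d ^ k > 0" using dpos by simp
  have qle: "real q \<le> p * real d ^ k" unfolding q_def rb_q_def d_def[symmetric]
    by (rule nat_floor_le) (use p dk in simp)
  have qlt: "q < d ^ k"
  proof -
    have "real q < real d ^ k" using qle p dk by (smt (verit) mult_less_cancel_right2)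
    then show ?thesis by (metis of_nat_less_iff of_nat_power)
  qed
  have pp0: "0 \<le> pp" unfolding pp_def rb_p_def by simp
  have ppp: "pp \<le> p" unfolding pp_def rb_p_def q_def[symmetric] d_def[symmetric]
    using qle dk by (simp add: divide_le_eq)
  have ex: "rb_moment_ratio \<alpha> r k p n = (\<Sum>S\<le>n. rb_B n d S * (1 + pp / (1 - pp)
            * ((real (S choose k) / real (n choose k) - (1 / real d) ^ k) / (1 - (1 / real d) ^ k))) ^ t)"
    unfolding rb_moment_ratio_def Let_def d_def[symmetric] t_def[symmetric] q_def[symmetric] pp_def rb_p_def
    using exact_ratio[OF kn _ d2 qlt] k by simp
  note C = core[OF _ kn d2 p pp0 ppp \<sigma>_def \<sigma>4 b b\<sigma> bd, of t]
  show "(\<Sum>S\<le>n. rb_B n (rb_d \<alpha> n) S *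
              (rb_f (rb_p \<alpha> k p n) (rb_d \<alpha> n) k (real S / real n)
               + rb_p \<alpha> k p n * rb_g k (real S / real n)
                 / ((1 - rb_p \<alpha> k p n) * (1 - (1 / real (rb_d \<alpha> n)) ^ k) * real n)) ^ rb_t \<alpha> r n) > 0"
    using C(1) k unfolding d_def t_def pp_def by simp
  show "(\<Sum>S\<le>n. rb_B n (rb_d \<alpha> n) S *
              (rb_f (rb_p \<alpha> k p n) (rb_d \<alpha> n) k (real S / real n)
               + rb_p \<alpha> k p n * rb_g k (real S / real n)
                 / ((1 - rb_p \<alpha> k p n) * (1 - (1 / real (rb_d \<alpha> n)) ^ k) * real n)) ^ rb_t \<alpha> r n)
         \<le> (\<Sum>S\<le>n. rb_B n (rb_d \<alpha> n) S *
              rb_f (rb_p \<alpha> k p n) (rb_d \<alpha> n) k (real S / real n) ^ rb_t \<alpha> r n)"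
    using C(3) k unfolding d_def t_def pp_def by simp
  have tb: "real t \<le> r * real n * (\<alpha> * ln (real n))"
  proof -
    have lnd: "0 \<le> ln (real d)" using d2 by simp
    have "real t \<le> r * real n * ln (real d)" unfolding t_def rb_t_def d_def[symmetric]
      by (rule nat_floor_le) (use r lnd in simp)
    also have "ln (real d) \<le> ln (real n powr \<alpha>)" by (rule ln_le_cancel_iff[THEN iffD2]) (use dpos dhi npos in auto)
    also have "ln (real n powr \<alpha>) = \<alpha> * ln (real n)" using npos by (simp add: ln_powr)
    finally show ?thesis using r npos by (simp add: mult_left_mono)
  qed
  have expb: "real t * (12 * b * \<sigma>\<^sup>2) \<le> 12 * b * real k ^ 4 * r * \<alpha> * (ln (real n) / real n)"
  proof -
    have lnn: "ln (real n) \<ge> 0" using n1 by simp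
    have s2: "\<sigma>\<^sup>2 \<le> (real k ^ 2 / real n)\<^sup>2" using \<sigma>k \<sigma>0 by (intro power_mono) auto
    have "real t * (12 * b * \<sigma>\<^sup>2) \<le> (r * real n * (\<alpha> * ln (real n))) * (12 * b * (real k ^ 2 / real n)\<^sup>2)"
      using tb s2 b0 r \<alpha> lnn by (intro mult_mono mult_left_mono) auto
    also have "\<dots> = 12 * b * real k ^ 4 * r * \<alpha> * (ln (real n) / real n)"
      using npos by (simp add: power2_eq_square field_simps numeral_eq_Suc)
    finally show ?thesis .
  qed
  show "\<bar>rb_moment_ratio \<alpha> r k p n / (\<Sum>S\<le>n. rb_B n (rb_d \<alpha> n) S *
              (rb_f (rb_p \<alpha> k p n) (rb_d \<alpha> n) k (real S / real n)
               + rb_p \<alpha> k p n * rb_g k (real S / real n)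
                 / ((1 - rb_p \<alpha> k p n) * (1 - (1 / real (rb_d \<alpha> n)) ^ k) * real n)) ^ rb_t \<alpha> r n) - 1\<bar>
         \<le> exp (12 * b * real k ^ 4 * r * \<alpha> * (ln (real n) / real n)) - 1"
  proof -
    have "\<bar>rb_moment_ratio \<alpha> r k p n / (\<Sum>S\<le>n. rb_B n (rb_d \<alpha> n) S *
              (rb_f (rb_p \<alpha> k p n) (rb_d \<alpha> n) k (real S / real n)
               + rb_p \<alpha> k p n * rb_g k (real S / real n)
                 / ((1 - rb_p \<alpha> k p n) * (1 - (1 / real (rb_d \<alpha> n)) ^ k) * real n)) ^ rb_t \<alpha> r n) - 1\<bar>
         \<le> exp (real t * (12 * b * \<sigma>\<^sup>2)) - 1"
      using C(2) k unfolding ex unfolding d_def t_def pp_def by simp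
    also have "\<dots> \<le> exp (12 * b * real k ^ 4 * r * \<alpha> * (ln (real n) / real n)) - 1"
      using expb by simp
    finally show ?thesis .
  qed
qed


theorem lemma4p1:
  fixes \<alpha> r p :: real and k :: nat
  assumes "\<alpha> > 0" and "r > 0" and "k \<ge> 2" and "0 < p" and "p < 1"
  shows "\<exists>e1 e2 :: nat \<Rightarrow> real. e1 \<longlonglongrightarrow> 0 \<and> e2 \<longlonglongrightarrow> 0 \<and>
    (\<forall>\<^sub>F n in sequentially.
       rb_moment_ratio \<alpha> r k p n
         = (1 + e1 n) * (\<Sum>S\<le>n. rb_B n (rb_d \<alpha> n) S *
              (rb_f (rb_p \<alpha> k p n) (rb_d \<alpha> n) k (real S / real n)
               + rb_p \<alpha> k p n * rb_g k (real S / real n)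
                 / ((1 - rb_p \<alpha> k p n) * (1 - (1 / real (rb_d \<alpha> n)) ^ k) * real n)) ^ rb_t \<alpha> r n)
     \<and> (\<Sum>S\<le>n. rb_B n (rb_d \<alpha> n) S *
              (rb_f (rb_p \<alpha> k p n) (rb_d \<alpha> n) k (real S / real n)
               + rb_p \<alpha> k p n * rb_g k (real S / real n)
                 / ((1 - rb_p \<alpha> k p n) * (1 - (1 / real (rb_d \<alpha> n)) ^ k) * real n)) ^ rb_t \<alpha> r n)
         \<le> (1 + e2 n) * (\<Sum>S\<le>n. rb_B n (rb_d \<alpha> n) S *
              rb_f (rb_p \<alpha> k p n) (rb_d \<alpha> n) k (real S / real n) ^ rb_t \<alpha> r n))"
proof -
  define b where "b = 2 * p / (1 - p)"
  define SA where "SA = (\<lambda>n. \<Sum>S\<le>n. rb_B n (rb_d \<alpha> n) S *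
              (rb_f (rb_p \<alpha> k p n) (rb_d \<alpha> n) k (real S / real n)
               + rb_p \<alpha> k p n * rb_g k (real S / real n)
                 / ((1 - rb_p \<alpha> k p n) * (1 - (1 / real (rb_d \<alpha> n)) ^ k) * real n)) ^ rb_t \<alpha> r n)"
  define C where "C = 12 * b * real k ^ 4 * r * \<alpha>"
  define e1 where "e1 = (\<lambda>n. rb_moment_ratio \<alpha> r k p n / SA n - 1)"
  have lim1: "filterlim (\<lambda>n::nat. real n powr \<alpha>) at_top at_top" using assms(1) by real_asymp
  have ev1: "\<forall>\<^sub>F n in sequentially. real n powr \<alpha> \<ge> max 2 (4 * b) + 1"
    using lim1 by (simp add: filterlim_at_top)
  have ev2: "\<forall>\<^sub>F n in sequentially. k \<le> n" by (rule eventually_ge_at_top)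
  have ev3: "\<forall>\<^sub>F n in sequentially. nat \<lceil>4 * real k ^ 2 * (b + 1)\<rceil> \<le> n" by (rule eventually_ge_at_top)
  have ev: "\<forall>\<^sub>F n in sequentially. k \<le> n \<and> 4 * real k ^ 2 * (b + 1) \<le> real n \<and> real n powr \<alpha> \<ge> max 2 (4 * b) + 1"
    using ev1 ev2 ev3
  proof eventually_elim
    case (elim n)
    then have "4 * real k ^ 2 * (b + 1) \<le> real n" by linarith
    then show ?case using elim by simp
  qed
  note pw = pointwise[OF assms(1-5) b_def]
  have evP: "\<forall>\<^sub>F n in sequentially. SA n > 0 \<and> \<bar>e1 n\<bar> \<le> exp (C * (ln (real n) / real n)) - 1
      \<and> rb_moment_ratio \<alpha> r k p n = (1 + e1 n) * SA n
      \<and> SA n \<le> (1 + 0) * (\<Sum>S\<le>n. rb_B n (rb_d \<alpha> n) S *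
              rb_f (rb_p \<alpha> k p n) (rb_d \<alpha> n) k (real S / real n) ^ rb_t \<alpha> r n)"
    using ev
  proof eventually_elim
    case (elim n)
    then have h1: "k \<le> n" and h2: "4 * real k ^ 2 * (b + 1) \<le> real n" and h3: "real n powr \<alpha> \<ge> max 2 (4 * b) + 1"
      by auto
    have pos: "SA n > 0" using pw(1)[OF h1 h2 h3] unfolding SA_def .
    moreover have "\<bar>e1 n\<bar> \<le> exp (C * (ln (real n) / real n)) - 1"
      using pw(2)[OF h1 h2 h3] unfolding e1_def SA_def C_def .
    moreover have "rb_moment_ratio \<alpha> r k p n = (1 + e1 n) * SA n" unfolding e1_def using pos by simp
    moreover have "SA n \<le> (1 + 0) * (\<Sum>S\<le>n. rb_B n (rb_d \<alpha> n) S *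
              rb_f (rb_p \<alpha> k p n) (rb_d \<alpha> n) k (real S / real n) ^ rb_t \<alpha> r n)"
      using pw(3)[OF h1 h2 h3] unfolding SA_def by simp
    ultimately show ?case by blast
  qed
  have limh: "(\<lambda>n::nat. exp (C * (ln (real n) / real n)) - 1) \<longlonglongrightarrow> 0"
  proof -
    have "(\<lambda>n::nat. ln (real n) / real n) \<longlonglongrightarrow> 0" by real_asymp
    then have "(\<lambda>n::nat. C * (ln (real n) / real n)) \<longlonglongrightarrow> C * 0" by (intro tendsto_mult tendsto_const)
    then have "(\<lambda>n::nat. exp (C * (ln (real n) / real n))) \<longlonglongrightarrow> exp (C * 0)" by (rule tendsto_exp)
    then have "(\<lambda>n::nat. exp (C * (ln (real n) / real n)) - 1) \<longlonglongrightarrow> exp (C * 0) - 1" by (intro tendsto_diff tendsto_const)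
    then show ?thesis by simp
  qed
  have lime1: "e1 \<longlonglongrightarrow> 0"
  proof (rule Lim_null_comparison[OF _ limh])
    show "\<forall>\<^sub>F n in sequentially. norm (e1 n) \<le> exp (C * (ln (real n) / real n)) - 1"
      using evP by eventually_elim auto
  qed
  have fin: "\<forall>\<^sub>F n in sequentially.
       rb_moment_ratio \<alpha> r k p n
         = (1 + e1 n) * (\<Sum>S\<le>n. rb_B n (rb_d \<alpha> n) S *
              (rb_f (rb_p \<alpha> k p n) (rb_d \<alpha> n) k (real S / real n)
               + rb_p \<alpha> k p n * rb_g k (real S / real n)
                 / ((1 - rb_p \<alpha> k p n) * (1 - (1 / real (rb_d \<alpha> n)) ^ k) * real n)) ^ rb_t \<alpha> r n)
     \<and> (\<Sum>S\<le>n. rb_B n (rb_d \<alpha> n) S *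
              (rb_f (rb_p \<alpha> k p n) (rb_d \<alpha> n) k (real S / real n)
               + rb_p \<alpha> k p n * rb_g k (real S / real n)
                 / ((1 - rb_p \<alpha> k p n) * (1 - (1 / real (rb_d \<alpha> n)) ^ k) * real n)) ^ rb_t \<alpha> r n)
         \<le> (1 + 0) * (\<Sum>S\<le>n. rb_B n (rb_d \<alpha> n) S *
              rb_f (rb_p \<alpha> k p n) (rb_d \<alpha> n) k (real S / real n) ^ rb_t \<alpha> r n)"
      using evP unfolding SA_def by eventually_elim blast
  show ?thesis
    by (rule exI[of _ e1], rule exI[of _ "\<lambda>_. 0"]) (use lime1 fin in simp)
qed

end
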